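(* Consider the decentralized caching problem with $N$ files and local cache size of $M$ files per user, with $0<M\le N$. For every file size $F$, every $\epsilon>0$, every number $K$ of requesting users and every statistics $\boldsymbol{s}$ of demands in $\{1,\dots,N\}^K$, $$\min_{P_{\mathcal{M}}}R^*_{\epsilon,K}(\boldsymbol{s},P_{\mathcal{M}})\ \ge\ \frac{N-M}{M}\left(1-\left(1-\frac{M}{N}\right)^{N_{\mathrm{e}}(\boldsymbol{s})}\right)-\left(\frac{1}{F}+N_{\mathrm{e}}^2(\boldsymbol{s})\epsilon\right),$$ where the minimum is over all prefetching distributions $P_{\mathcal{M}}$.
   Context: Setting: $N$ files of $F$ bits each, all bits i.i.d. Bernoulli$(1/2)$. A prefetching distribution $P_{\mathcal{M}}$ is a probability distribution on sets of at most $MF$ bit indices; with $K$ requesting users, cache index sets $\mathcal{M}_1,\dots,\mathcal{M}_K$ are drawn i.i.d. from $P_{\mathcal{M}}$ and user $k$ stores the indexed bits uncoded. For a deterministic prefetching $\boldsymbol{\mathcal{M}}$ and demand $\boldsymbol{d}\in\{1,\dots,N\}^K$, a rate $R$ is $\epsilon$-achievable if there are an encoder $X=\psi(W_1,\dots,W_N)\in\{0,1\}^{RF}$ and decoders such that each user $k$ recovers $W_{d_k}$ from $X$ and its cached bits with error probability at most $\epsilon$. Given $P_{\mathcal{M}}$ and $\boldsymbol{d}$, $R$ is $\epsilon$-achievable if for every realization $\boldsymbol{\mathcal{M}}$ there is $\epsilon_{\boldsymbol{\mathcal{M}}}$ with $R$ $\epsilon_{\boldsymbol{\mathcal{M}}}$-achievable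 given $\boldsymbol{\mathcal{M}},\boldsymbol{d}$ and $\mathbb{E}[\epsilon_{\boldsymbol{\mathcal{M}}}]\le\epsilon$; $R^*_{\epsilon,K}(\boldsymbol{d},P_{\mathcal{M}})$ is the minimum such rate. The statistics $\boldsymbol{s}(\boldsymbol{d})$ of a demand is the length-$N$ array, sorted nonincreasingly, whose $i$-th entry is the number of users requesting the $i$-th most requested file; $\mathcal{D}_{\boldsymbol{s}}$ is the set of demands with statistics $\boldsymbol{s}$; $N_{\mathrm{e}}(\boldsymbol{s})$ is the number of distinct requested files. $R^*_{\epsilon,K}(\boldsymbol{s},P_{\mathcal{M}})=\frac{1}{|\mathcal{D}_{\boldsymbol{s}}|}\sum_{\boldsymbol{d}\in\mathcal{D}_{\boldsymbol{s}}}R^*_{\epsilon,K}(\boldsymbol{d},P_{\mathcal{M}})$. *)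

theory Defs
  imports "HOL-Probability.Probability_Mass_Function"
begin

text \<open>Bit indices: pairs (file n, position j) with n in 1..N, j in 1..F.\<close>
definition bit_idx :: "nat \<Rightarrow> nat \<Rightarrow> (nat \<times> nat) set" where
  "bit_idx N F = {1..N} \<times> {1..F}"

text \<open>All realizations of the library (uniformly distributed).\<close>
definition file_lib :: "nat \<Rightarrow> nat \<Rightarrow> (nat \<times> nat \<Rightarrow> bool) set" where
  "file_lib N F = PiE (bit_idx N F) (\<lambda>_. UNIV)"

definition demands :: "nat \<Rightarrow> nat \<Rightarrow> (nat \<Rightarrow> nat) set" where
  "demands N K = PiE {1..K} (\<lambda>_. {1..N})"

definition valid_prefetch :: "nat \<Rightarrow> nat \<Rightarrow> real \<Rightarrow> (nat \<times> nat) set pmf \<Rightarrow> bool" where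
  "valid_prefetch N F M P \<longleftrightarrow>
     set_pmf P \<subseteq> {S. S \<subseteq> bit_idx N F \<and> real (card S) \<le> M * real F}"

definition achievable_det ::
  "nat \<Rightarrow> nat \<Rightarrow> nat \<Rightarrow> (nat \<Rightarrow> (nat \<times> nat) set) \<Rightarrow> (nat \<Rightarrow> nat) \<Rightarrow> real \<Rightarrow> real \<Rightarrow> bool" where
  "achievable_det N F K Ms d R e \<longleftrightarrow>
     (\<exists>(\<psi> :: (nat \<times> nat \<Rightarrow> bool) \<Rightarrow> bool list)
        (\<phi> :: nat \<Rightarrow> bool list \<Rightarrow> (nat \<times> nat \<Rightarrow> bool) \<Rightarrow> nat \<Rightarrow> bool).
        (\<forall>W\<in>file_lib N F. length (\<psi> W) = nat \<lfloor>R * real F\<rfloor>) \<and>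
        (\<forall>k\<in>{1..K}.
           real (card {W \<in> file_lib N F.
                   \<exists>j\<in>{1..F}. \<phi> k (\<psi> W) (restrict W (Ms k)) j \<noteq> W (d k, j)})
             / 2 ^ (N * F) \<le> e))"

definition cache_tuples :: "nat \<Rightarrow> nat \<Rightarrow> nat \<Rightarrow> (nat \<Rightarrow> (nat \<times> nat) set) set" where
  "cache_tuples N F K = PiE {1..K} (\<lambda>_. Pow (bit_idx N F))"

definition achievable_P ::
  "nat \<Rightarrow> nat \<Rightarrow> nat \<Rightarrow> (nat \<times> nat) set pmf \<Rightarrow> (nat \<Rightarrow> nat) \<Rightarrow> real \<Rightarrow> real \<Rightarrow> bool" where
  "achievable_P N F K P d R eps \<longleftrightarrow>
     (\<exists>e :: (nat \<Rightarrow> (nat \<times> nat) set) \<Rightarrow> real.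
        (\<forall>Ms\<in>cache_tuples N F K. achievable_det N F K Ms d R (e Ms)) \<and>
        (\<Sum>Ms\<in>cache_tuples N F K. (\<Prod>k\<in>{1..K}. pmf P (Ms k)) * e Ms) \<le> eps)"

definition Rstar_d ::
  "nat \<Rightarrow> nat \<Rightarrow> nat \<Rightarrow> real \<Rightarrow> (nat \<Rightarrow> nat) \<Rightarrow> (nat \<times> nat) set pmf \<Rightarrow> real" where
  "Rstar_d N F K eps d P = Inf {R. R \<ge> 0 \<and> achievable_P N F K P d R eps}"

definition stats :: "nat \<Rightarrow> nat \<Rightarrow> (nat \<Rightarrow> nat) \<Rightarrow> nat list" where
  "stats N K d = rev (sort (map (\<lambda>i. card {k\<in>{1..K}. d k = i}) [1..<N+1]))"

definition demands_of_stats :: "nat \<Rightarrow> nat \<Rightarrow> nat list \<Rightarrow> (nat \<Rightarrow> nat) set" where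
  "demands_of_stats N K s = {d \<in> demands N K. stats N K d = s}"

definition Ne :: "nat list \<Rightarrow> nat" where
  "Ne s = length (filter (\<lambda>x. x > 0) s)"

definition Rstar_s ::
  "nat \<Rightarrow> nat \<Rightarrow> nat \<Rightarrow> real \<Rightarrow> nat list \<Rightarrow> (nat \<times> nat) set pmf \<Rightarrow> real" where
  "Rstar_s N F K eps s P =
     (\<Sum>d\<in>demands_of_stats N K s. Rstar_d N F K eps d P) / real (card (demands_of_stats N K s))"

end

theory Submission
  imports Defs "HOL-Analysis.Convex"
begin


lemma card_bit_idx: "card (bit_idx N F) = N*F" by (simp add: bit_idx_def)
lemma finite_bit_idx[simp]: "finite (bit_idx N F)" by (simp add: bit_idx_def)

lemma card_PiE_bool: "finite A \<Longrightarrow> card (PiE A (\<lambda>_. UNIV :: bool set)) = 2 ^ card A"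
  by (simp add: card_PiE)

lemma finite_file_lib[simp]: "finite (file_lib N F)"
  by (simp add: file_lib_def finite_PiE)

lemma card_file_lib: "card (file_lib N F) = 2 ^ (N*F)"
  by (simp add: file_lib_def card_PiE_bool card_bit_idx)

lemma arith_core:
  fixes L u n F :: nat and e :: real
  assumes e: "n > 0 \<Longrightarrow> e \<ge> 0" and un: "u \<le> n * F"
    and main: "(1 - real n * e) * 2 ^ u \<le> 2 ^ L"
  shows "real u - 1 - real n ^ 2 * e * real F \<le> real L"
proof (cases "u \<le> L + 1")
  case True
  have "real n ^ 2 * e * real F \<ge> 0"
    using e by (cases "n = 0") auto
  then show ?thesis using True by linarith
next
  case False
  define x where "x = u - L"
  have x2: "x \<ge> 2" and ux: "u = L + x" using False by (auto simp: x_def)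
  have pos: "(0::real) < 2 ^ u" by simp
  have "(1 - real n * e) \<le> 2 ^ L / 2 ^ u" using main pos by (simp add: field_simps)
  also have "2 ^ L / 2 ^ u = (1::real) / 2 ^ x" using ux by (simp add: power_add)
  finally have A: "1 - 1 / 2 ^ x \<le> real n * e" by simp
  have n0: "n > 0"
  proof (rule ccontr)
    assume "\<not> n > 0"
    then have "1 \<le> (1::real) / 2 ^ x" using A by simp
    moreover have "(1::real) / 2 ^ x < 1" using x2 by (simp add: divide_less_eq)
    ultimately show False by simp
  qed
  have xle: "real x \<le> 2 ^ x"
  proof -
    have "x < 2 ^ x" by (rule less_exp)
    then have "real x < real (2 ^ x)" by linarith
    then show ?thesis by simp
  qed
  have h1: "0 \<le> 1 - 1 / (2::real) ^ x" by (simp add: divide_le_eq)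
  have "real x - 1 \<le> (1 - 1 / 2 ^ x) * real x"
  proof -
    have "real x / 2 ^ x \<le> 1" using xle by (simp add: divide_le_eq)
    then show ?thesis by (simp add: algebra_simps)
  qed
  also have "\<dots> \<le> (1 - 1 / 2 ^ x) * real u" using h1 ux by (intro mult_left_mono) auto
  also have "\<dots> \<le> (1 - 1 / 2 ^ x) * (real n * real F)"
    using h1 un by (intro mult_left_mono) (auto simp flip: of_nat_mult)
  also have "\<dots> \<le> (real n * e) * (real n * real F)"
    using A by (intro mult_right_mono) auto
  finally have "real x - 1 \<le> real n ^ 2 * e * real F" by (simp add: power2_eq_square algebra_simps)
  then show ?thesis using ux by simp
qed

definition Bset :: "nat \<Rightarrow> (nat \<Rightarrow> (nat \<times> nat) set) \<Rightarrow> (nat \<Rightarrow> nat) \<Rightarrow> nat set \<Rightarrow> (nat \<times> nat) set" where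
  "Bset F Ms d T = {(d k, j) | k j. k \<in> T \<and> j \<in> {1..F} \<and> (\<forall>k'\<in>T. k' \<le> k \<longrightarrow> (d k, j) \<notin> Ms k')}"

lemma Bset_sub: "Bset F Ms d T \<subseteq> (\<lambda>(k,j). (d k, j)) ` (T \<times> {1..F})"
  unfolding Bset_def by auto

lemma card_Bset_le: "finite T \<Longrightarrow> card (Bset F Ms d T) \<le> card T * F"
proof -
  assume "finite T"
  then have "card (Bset F Ms d T) \<le> card ((\<lambda>(k,j). (d k, j)) ` (T \<times> {1..F}))"
    by (intro card_mono Bset_sub) auto
  also have "\<dots> \<le> card (T \<times> {1..F})" by (rule card_image_le) (use \<open>finite T\<close> in auto)
  finally show ?thesis by (simp add: card_cartesian_product)
qed

lemma core:
  fixes N F K :: nat and Ms :: "nat \<Rightarrow> (nat \<times> nat) set" and d :: "nat \<Rightarrow> nat" and R e :: real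
  assumes ach: "achievable_det N F K Ms d R e" and R0: "R \<ge> 0"
    and T: "T \<subseteq> {1..K}" and dT: "d ` T \<subseteq> {1..N}"
  shows "real (card (Bset F Ms d T)) - 1 - real (card T) ^ 2 * e * real F \<le> R * real F"
proof -
  obtain \<psi> :: "(nat \<times> nat \<Rightarrow> bool) \<Rightarrow> bool list" and
     \<phi> :: "nat \<Rightarrow> bool list \<Rightarrow> (nat \<times> nat \<Rightarrow> bool) \<Rightarrow> nat \<Rightarrow> bool" where
    len: "\<forall>W\<in>file_lib N F. length (\<psi> W) = nat \<lfloor>R * real F\<rfloor>" and
    err: "\<forall>k\<in>{1..K}. real (card {W \<in> file_lib N F.
                   \<exists>j\<in>{1..F}. \<phi> k (\<psi> W) (restrict W (Ms k)) j \<noteq> W (d k, j)}) / 2 ^ (N * F) \<le> e"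
    using ach unfolding achievable_det_def by blast
  define L where "L = nat \<lfloor>R * real F\<rfloor>"
  define Err where "Err k = {W \<in> file_lib N F. \<exists>j\<in>{1..F}. \<phi> k (\<psi> W) (restrict W (Ms k)) j \<noteq> W (d k, j)}" for k
  define G where "G = file_lib N F - (\<Union>k\<in>T. Err k)"
  define B where "B = Bset F Ms d T"
  define C where "C = bit_idx N F - B"
  define n where "n = card T"
  have finT: "finite T" using T finite_subset by blast
  have Bsub: "B \<subseteq> bit_idx N F"
    using dT unfolding B_def Bset_def bit_idx_def by auto
  have cardC: "card C = N * F - card B"
    unfolding C_def using Bsub by (simp add: card_Diff_subset card_bit_idx finite_subset)
  have cardB: "card B \<le> N * F" using Bsub card_mono[OF finite_bit_idx Bsub] by (simp add: card_bit_idx)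
  have pow2: "(2::real) ^ (N*F) > 0" by simp
  have errk: "real (card (Err k)) \<le> e * 2 ^ (N*F)" if "k \<in> T" for k
    using err that T pow2 unfolding Err_def by (auto simp: divide_le_eq)
  have "real (card (file_lib N F)) \<le> real (card G) + real (card (\<Union>k\<in>T. Err k))"
  proof -
    have sub: "file_lib N F \<subseteq> G \<union> (\<Union>k\<in>T. Err k)" by (auto simp: G_def)
    have fin: "finite (G \<union> (\<Union>k\<in>T. Err k))"
      by (rule finite_subset[of _ "file_lib N F"]) (auto simp: G_def Err_def)
    have "card (file_lib N F) \<le> card (G \<union> (\<Union>k\<in>T. Err k))" by (rule card_mono[OF fin sub])
    also have "\<dots> \<le> card G + card (\<Union>k\<in>T. Err k)" by (rule card_Un_le)
    finally have "card (file_lib N F) \<le> card G + card (\<Union>k\<in>T. Err k)" .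
    then show ?thesis by linarith
  qed
  also have "real (card (\<Union>k\<in>T. Err k)) \<le> (\<Sum>k\<in>T. real (card (Err k)))"
    using card_UN_le[OF finT, of Err] by (simp flip: of_nat_sum)
  also have "\<dots> \<le> (\<Sum>k\<in>T. e * 2 ^ (N*F))" by (rule sum_mono) (rule errk)
  finally have Glow: "2 ^ (N*F) * (1 - real n * e) \<le> real (card G)"
    by (simp add: card_file_lib n_def algebra_simps)
  define h where "h W = (\<psi> W, restrict W C)" for W :: "nat \<times> nat \<Rightarrow> bool"
  have inj: "inj_on h G"
  proof (rule inj_onI)
    fix W W' assume WG: "W \<in> G" and W'G: "W' \<in> G" and hh: "h W = h W'"
    have psi: "\<psi> W = \<psi> W'" and rC: "restrict W C = restrict W' C" using hh by (auto simp: h_def)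
    have WL: "W \<in> file_lib N F" and W'L: "W' \<in> file_lib N F" using WG W'G by (auto simp: G_def)
    have outside: "W x = W' x" if "x \<notin> bit_idx N F" for x
    proof -
      have "W x = undefined" "W' x = undefined" using WL W'L that
        unfolding file_lib_def by (auto intro: PiE_arb)
      then show ?thesis by simp
    qed
    have onC: "W x = W' x" if "x \<in> C" for x using rC that by (metis restrict_apply')
    have ok: "\<phi> k (\<psi> V) (restrict V (Ms k)) j = V (d k, j)" if "V \<in> G" "k \<in> T" "j \<in> {1..F}" for V k j
      using that unfolding G_def Err_def by blast
    have files: "\<forall>k\<in>T. \<forall>j\<in>{1..F}. W (d k, j) = W' (d k, j)" for m
    proof -
      have "\<forall>j\<in>{1..F}. W (d k, j) = W' (d k, j)" if "k \<in> T" for k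
        using that
      proof (induction k rule: less_induct)
        case (less k)
        have rM: "restrict W (Ms k) = restrict W' (Ms k)"
        proof
          fix x show "restrict W (Ms k) x = restrict W' (Ms k) x"
          proof (cases "x \<in> Ms k")
            case False then show ?thesis by simp
          next
            case xM: True
            show ?thesis
            proof (cases "x \<in> bit_idx N F")
              case False then show ?thesis using outside by simp
            next
              case True
              show ?thesis
              proof (cases "x \<in> C")
                case True then show ?thesis using onC by simp
              next
                case False
                with \<open>x \<in> bit_idx N F\<close> have "x \<in> B" by (simp add: C_def)
                then obtain k'' j where x: "x = (d k'', j)" and k'': "k'' \<in> T" "j \<in> {1..F}"
                  and nm: "\<forall>k'\<in>T. k' \<le> k'' \<longrightarrow> (d k'', j) \<notin> Ms k'"
                  unfolding B_def Bset_def by blast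
                have "\<not> k \<le> k''" using nm xM x less.prems by blast
                then have "k'' < k" by simp
                then show ?thesis using less.IH[OF _ k''(1)] k''(2) x by simp
              qed
            qed
          qed
        qed
        show ?case
        proof
          fix j assume j: "j \<in> {1..F}"
          have "W (d k, j) = \<phi> k (\<psi> W) (restrict W (Ms k)) j" using ok[OF WG less.prems j] by simp
          also have "\<dots> = \<phi> k (\<psi> W') (restrict W' (Ms k)) j" using psi rM by simp
          also have "\<dots> = W' (d k, j)" using ok[OF W'G less.prems j] by simp
          finally show "W (d k, j) = W' (d k, j)" .
        qed
      qed
      then show ?thesis by blast
    qed
    show "W = W'"
    proof
      fix x show "W x = W' x"
      proof (cases "x \<in> bit_idx N F")
        case False then show ?thesis using outside by simp
      next
        case True
        show ?thesis
        proof (cases "x \<in> C")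
          case True then show ?thesis using onC by simp
        next
          case False
          with \<open>x \<in> bit_idx N F\<close> have "x \<in> B" by (simp add: C_def)
          then obtain k j where "x = (d k, j)" "k \<in> T" "j \<in> {1..F}"
            unfolding B_def Bset_def by blast
          then show ?thesis using files by simp
        qed
      qed
    qed
  qed
  have img: "h ` G \<subseteq> {xs. set xs \<subseteq> UNIV \<and> length xs = L} \<times> PiE C (\<lambda>_. UNIV)"
  proof
    fix y assume "y \<in> h ` G"
    then obtain W where W: "W \<in> G" "y = h W" by blast
    then have WL: "W \<in> file_lib N F" by (simp add: G_def)
    then show "y \<in> {xs. set xs \<subseteq> UNIV \<and> length xs = L} \<times> PiE C (\<lambda>_. UNIV)"
      using W len by (auto simp: h_def L_def)
  qed
  have finC: "finite C" by (simp add: C_def)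
  have "card G = card (h ` G)" using inj by (simp add: card_image)
  also have "\<dots> \<le> card ({xs. set xs \<subseteq> (UNIV::bool set) \<and> length xs = L} \<times> PiE C (\<lambda>_. UNIV::bool set))"
  proof (rule card_mono[OF _ img])
    have "finite {xs::bool list. length xs = L}" using finite_lists_length_eq[of "UNIV::bool set" L] by simp
    then show "finite ({xs. set xs \<subseteq> (UNIV::bool set) \<and> length xs = L} \<times> PiE C (\<lambda>_. UNIV::bool set))"
      by (simp add: finite_PiE finC)
  qed
  also have "\<dots> = 2 ^ L * 2 ^ card C"
  proof -
    have "card {xs::bool list. length xs = L} = 2 ^ L"
      using card_lists_length_eq[of "UNIV::bool set" L] by simp
    then show ?thesis by (simp add: card_cartesian_product card_PiE_bool finC)
  qed
  finally have "card G \<le> 2 ^ L * 2 ^ (N * F - card B)" unfolding cardC .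
  then have Gup: "real (card G) \<le> 2 ^ L * 2 ^ (N * F - card B)"
  proof -
    from \<open>card G \<le> 2 ^ L * 2 ^ (N * F - card B)\<close>
    have "real (card G) \<le> real (2 ^ L * 2 ^ (N * F - card B))" by (rule of_nat_mono)
    then show ?thesis by simp
  qed
  have "2 ^ (N*F) * (1 - real n * e) \<le> 2 ^ L * 2 ^ (N * F - card B)"
    using Glow Gup by linarith
  also have "(2::real) ^ (N * F - card B) = 2 ^ (N*F) / 2 ^ card B"
    using cardB by (simp add: power_diff)
  finally have "2 ^ (N*F) * (1 - real n * e) \<le> 2 ^ (N*F) * (2 ^ L / 2 ^ card B)"
    by (simp add: field_simps)
  then have "(1 - real n * e) \<le> 2 ^ L / 2 ^ card B" by (rule mult_left_le_imp_le[OF _ pow2])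
  then have main: "(1 - real n * e) * 2 ^ card B \<le> 2 ^ L" by (simp add: field_simps)
  have e0: "e \<ge> 0" if "n > 0"
  proof -
    from that have "T \<noteq> {}" by (auto simp: n_def)
    then obtain k where "k \<in> T" by blast
    then show ?thesis using errk[of k] pow2
      by (meson of_nat_0_le_iff order_trans zero_le_mult_iff not_le)
  qed
  have "real (card B) - 1 - real n ^ 2 * e * real F \<le> real L"
    by (rule arith_core[OF e0 _ main]) (use card_Bset_le[OF finT] in \<open>simp_all add: B_def n_def\<close>)
  also have "real L \<le> R * real F" using R0 by (simp add: L_def)
  finally show ?thesis by (simp add: B_def n_def)
qed



definition pb :: "nat \<Rightarrow> nat \<Rightarrow> (nat\<times>nat) set pmf \<Rightarrow> nat\<times>nat \<Rightarrow> real" where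
  "pb N F P b = (\<Sum>S\<in>Pow (bit_idx N F). pmf P S * (if b \<in> S then 1 else 0))"

definition wt :: "nat \<Rightarrow> (nat\<times>nat) set pmf \<Rightarrow> (nat \<Rightarrow> (nat\<times>nat) set) \<Rightarrow> real" where
  "wt K P Ms = (\<Prod>k\<in>{1..K}. pmf P (Ms k))"

lemma finite_cache_tuples[simp]: "finite (cache_tuples N F K)"
  by (simp add: cache_tuples_def finite_PiE)

lemma wt_nonneg: "wt K P Ms \<ge> 0" by (simp add: wt_def prod_nonneg)

lemma sum_pow_pmf: "valid_prefetch N F M P \<Longrightarrow> (\<Sum>S\<in>Pow (bit_idx N F). pmf P S) = 1"
  by (rule sum_pmf_eq_1) (auto simp: valid_prefetch_def)

lemma sum_wt: assumes "valid_prefetch N F M P"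
  shows "(\<Sum>Ms\<in>cache_tuples N F K. wt K P Ms) = 1"
proof -
  have "(\<Prod>k\<in>{1..K}. \<Sum>S\<in>Pow (bit_idx N F). pmf P S) = (\<Sum>Ms\<in>cache_tuples N F K. wt K P Ms)"
    unfolding cache_tuples_def wt_def by (rule prod_sum_PiE) auto
  then show ?thesis using sum_pow_pmf[OF assms] by simp
qed

lemma one_minus_pb: assumes "valid_prefetch N F M P"
  shows "(\<Sum>S\<in>Pow (bit_idx N F). pmf P S * (if b \<notin> S then 1 else 0)) = 1 - pb N F P b"
proof -
  have "(\<Sum>S\<in>Pow (bit_idx N F). pmf P S * (if b \<notin> S then 1 else 0)) =
        (\<Sum>S\<in>Pow (bit_idx N F). pmf P S - pmf P S * (if b \<in> S then 1 else 0))"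
    by (rule sum.cong) auto
  also have "\<dots> = 1 - pb N F P b"
    by (simp add: sum_subtractf pb_def sum_pow_pmf[OF assms])
  finally show ?thesis .
qed

lemma expect_ind:
  assumes vp: "valid_prefetch N F M P" and A: "A \<subseteq> {1..K}"
  shows "(\<Sum>Ms\<in>cache_tuples N F K. wt K P Ms * (if \<forall>k\<in>A. b \<notin> Ms k then 1 else 0))
         = (1 - pb N F P b) ^ card A"
proof -
  define g where "g k S = pmf P S * (if k \<in> A then (if b \<notin> S then 1 else 0) else 1)" for k S
  have "(\<Prod>k\<in>{1..K}. \<Sum>S\<in>Pow (bit_idx N F). g k S) = (\<Sum>Ms\<in>cache_tuples N F K. \<Prod>k\<in>{1..K}. g k (Ms k))"
    unfolding cache_tuples_def by (rule prod_sum_PiE) auto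
  also have "\<dots> = (\<Sum>Ms\<in>cache_tuples N F K. wt K P Ms * (if \<forall>k\<in>A. b \<notin> Ms k then 1 else 0))"
  proof (rule sum.cong[OF refl])
    fix Ms
    have "(\<Prod>k\<in>{1..K}. g k (Ms k)) = (\<Prod>k\<in>{1..K}. pmf P (Ms k)) *
           (\<Prod>k\<in>{1..K}. (if k \<in> A then (if b \<notin> Ms k then 1 else 0) else 1))"
      unfolding g_def by (simp add: prod.distrib)
    also have "(\<Prod>k\<in>{1..K}. (if k \<in> A then (if b \<notin> Ms k then 1 else 0) else 1)) =
               (if \<forall>k\<in>A. b \<notin> Ms k then 1 else (0::real))"
    proof (cases "\<forall>k\<in>A. b \<notin> Ms k")
      case True
      have "(\<Prod>k\<in>{1..K}. (if k \<in> A then (if b \<notin> Ms k then 1 else 0) else 1)) = (1::real)"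
        by (rule prod.neutral) (use True in auto)
      then show ?thesis using True by simp
    next
      case False
      then obtain k where "k \<in> A" "b \<in> Ms k" by blast
      then have "(\<Prod>k\<in>{1..K}. (if k \<in> A then (if b \<notin> Ms k then 1 else 0) else 1)) = (0::real)"
        using A by (intro prod_zero) auto
      then show ?thesis by (simp only: if_not_P[OF False])
    qed
    finally show "(\<Prod>k\<in>{1..K}. g k (Ms k)) = wt K P Ms * (if \<forall>k\<in>A. b \<notin> Ms k then 1 else 0)"
      by (simp add: wt_def)
  qed
  finally have eq: "(\<Sum>Ms\<in>cache_tuples N F K. wt K P Ms * (if \<forall>k\<in>A. b \<notin> Ms k then 1 else 0))
       = (\<Prod>k\<in>{1..K}. \<Sum>S\<in>Pow (bit_idx N F). g k S)" by simp
  have "(\<Prod>k\<in>{1..K}. \<Sum>S\<in>Pow (bit_idx N F). g k S) = (\<Prod>k\<in>{1..K}. if k \<in> A then 1 - pb N F P b else 1)"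
  proof (rule prod.cong[OF refl])
    fix k show "(\<Sum>S\<in>Pow (bit_idx N F). g k S) = (if k \<in> A then 1 - pb N F P b else 1)"
      by (cases "k \<in> A") (simp_all add: g_def one_minus_pb[OF vp] sum_pow_pmf[OF vp])
  qed
  also have "\<dots> = (\<Prod>k\<in>A. 1 - pb N F P b)"
    using A by (subst prod.If_cases) (auto simp: Int_absorb1)
  also have "\<dots> = (1 - pb N F P b) ^ card A" by simp
  finally show ?thesis using eq by simp
qed

lemma card_Bset_sum:
  assumes finT: "finite T" and inj: "inj_on d T"
  shows "real (card (Bset F Ms d T)) =
    (\<Sum>k\<in>T. \<Sum>j\<in>{1..F}. if \<forall>k'\<in>{k'\<in>T. k' \<le> k}. (d k, j) \<notin> Ms k' then 1 else 0)"
proof -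
  define Q where "Q = {kj \<in> T \<times> {1..F}. \<forall>k'\<in>{k'\<in>T. k' \<le> fst kj}. (d (fst kj), snd kj) \<notin> Ms k'}"
  have img: "Bset F Ms d T = (\<lambda>(k,j). (d k, j)) ` Q"
    unfolding Bset_def Q_def by force
  have injQ: "inj_on (\<lambda>(k,j). (d k, j)) Q"
    using inj unfolding Q_def by (auto simp: inj_on_def)
  have "card (Bset F Ms d T) = card Q" using img injQ by (simp add: card_image)
  also have "card Q = (\<Sum>kj\<in>Q. 1)" by simp
  also have "\<dots> = (\<Sum>kj\<in>T \<times> {1..F}. if \<forall>k'\<in>{k'\<in>T. k' \<le> fst kj}. (d (fst kj), snd kj) \<notin> Ms k' then 1 else 0)"
    unfolding Q_def using finT by (subst sum.inter_filter) auto
  finally have "real (card (Bset F Ms d T)) = real (\<Sum>kj\<in>T \<times> {1..F}. if \<forall>k'\<in>{k'\<in>T. k' \<le> fst kj}. (d (fst kj), snd kj) \<notin> Ms k' then 1 else 0)"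
    by simp
  also have "\<dots> = (\<Sum>kj\<in>T \<times> {1..F}. if \<forall>k'\<in>{k'\<in>T. k' \<le> fst kj}. (d (fst kj), snd kj) \<notin> Ms k' then 1 else (0::real))"
    by (subst of_nat_sum) (rule sum.cong; simp)
  also have "\<dots> = (\<Sum>k\<in>T. \<Sum>j\<in>{1..F}. if \<forall>k'\<in>{k'\<in>T. k' \<le> k}. (d k, j) \<notin> Ms k' then 1 else 0)"
    by (simp only: sum.cartesian_product) (simp add: case_prod_beta)
  finally show ?thesis .
qed

lemma expect_Bset:
  assumes vp: "valid_prefetch N F M P" and T: "T \<subseteq> {1..K}" and inj: "inj_on d T"
  shows "(\<Sum>Ms\<in>cache_tuples N F K. wt K P Ms * real (card (Bset F Ms d T))) =
    (\<Sum>k\<in>T. \<Sum>j\<in>{1..F}. (1 - pb N F P (d k, j)) ^ card {k'\<in>T. k' \<le> k})"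
proof -
  have finT: "finite T" using T finite_subset by blast
  have "(\<Sum>Ms\<in>cache_tuples N F K. wt K P Ms * real (card (Bset F Ms d T))) =
     (\<Sum>Ms\<in>cache_tuples N F K. \<Sum>k\<in>T. \<Sum>j\<in>{1..F}. wt K P Ms * (if \<forall>k'\<in>{k'\<in>T. k' \<le> k}. (d k, j) \<notin> Ms k' then 1 else 0))"
    by (simp add: card_Bset_sum[OF finT inj] sum_distrib_left)
  also have "\<dots> = (\<Sum>k\<in>T. \<Sum>j\<in>{1..F}. \<Sum>Ms\<in>cache_tuples N F K. wt K P Ms * (if \<forall>k'\<in>{k'\<in>T. k' \<le> k}. (d k, j) \<notin> Ms k' then 1 else 0))"
  proof -
    have "(\<Sum>Ms\<in>cache_tuples N F K. \<Sum>k\<in>T. \<Sum>j\<in>{1..F}. wt K P Ms * (if \<forall>k'\<in>{k'\<in>T. k' \<le> k}. (d k, j) \<notin> Ms k' then 1 else 0))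
      = (\<Sum>k\<in>T. \<Sum>Ms\<in>cache_tuples N F K. \<Sum>j\<in>{1..F}. wt K P Ms * (if \<forall>k'\<in>{k'\<in>T. k' \<le> k}. (d k, j) \<notin> Ms k' then 1 else 0))"
      by (rule sum.swap)
    also have "\<dots> = (\<Sum>k\<in>T. \<Sum>j\<in>{1..F}. \<Sum>Ms\<in>cache_tuples N F K. wt K P Ms * (if \<forall>k'\<in>{k'\<in>T. k' \<le> k}. (d k, j) \<notin> Ms k' then 1 else 0))"
      by (rule sum.cong[OF refl], rule sum.swap)
    finally show ?thesis .
  qed
  also have "\<dots> = (\<Sum>k\<in>T. \<Sum>j\<in>{1..F}. (1 - pb N F P (d k, j)) ^ card {k'\<in>T. k' \<le> k})"
    by (intro sum.cong refl expect_ind[OF vp]) (use T in auto)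
  finally show ?thesis .
qed



lemma achievable_N:
  assumes d: "d \<in> demands N K" and eps: "eps \<ge> 0"
  shows "achievable_P N F K P d (real N) eps"
proof -
  define bl where "bl = List.product [1..<N+1] [1..<F+1]"
  define \<psi> where "\<psi> W = map W bl" for W :: "nat \<times> nat \<Rightarrow> bool"
  define \<phi> where "\<phi> k xs (z :: nat \<times> nat \<Rightarrow> bool) j = (case map_of (zip bl xs) (d k, j) of None \<Rightarrow> False | Some b \<Rightarrow> b)"
    for k :: nat and xs :: "bool list" and z and j :: nat
  have setbl: "set bl = {1..N} \<times> {1..F}" by (auto simp: bl_def)
  have lenbl: "length bl = N * F" by (simp add: bl_def length_product)
  have det: "achievable_det N F K Ms d (real N) 0" for Ms
    unfolding achievable_det_def
  proof (intro exI[of _ \<psi>] exI[of _ \<phi>] conjI ballI)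
    fix W show "length (\<psi> W) = nat \<lfloor>real N * real F\<rfloor>"
      by (simp add: \<psi>_def lenbl flip: of_nat_mult)
  next
    fix k assume k: "k \<in> {1..K}"
    have dk: "d k \<in> {1..N}" using d k by (auto simp: demands_def)
    have E0: "{W \<in> file_lib N F. \<exists>j\<in>{1..F}. \<phi> k (\<psi> W) (restrict W (Ms k)) j \<noteq> W (d k, j)} = {}"
      using dk by (auto simp: \<phi>_def \<psi>_def map_of_zip_map setbl)
    then show "real (card {W \<in> file_lib N F. \<exists>j\<in>{1..F}. \<phi> k (\<psi> W) (restrict W (Ms k)) j \<noteq> W (d k, j)}) / 2 ^ (N * F) \<le> 0"
      unfolding E0 by simp
  qed
  show ?thesis unfolding achievable_P_def
    by (rule exI[of _ "\<lambda>_. 0"]) (use det eps in auto)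
qed

lemma Rd_bound:
  assumes vp: "valid_prefetch N F M P" and d: "d \<in> demands N K" and T: "T \<subseteq> {1..K}"
    and inj: "inj_on d T" and F: "F > 0" and eps: "eps > 0"
  shows "(\<Sum>k\<in>T. \<Sum>j\<in>{1..F}. (1 - pb N F P (d k, j)) ^ card {k'\<in>T. k' \<le> k}) / real F
           - 1 / real F - real (card T) ^ 2 * eps \<le> Rstar_d N F K eps d P"
  unfolding Rstar_d_def
proof (rule cInf_greatest)
  show "{R. R \<ge> 0 \<and> achievable_P N F K P d R eps} \<noteq> {}"
  proof -
    have "real N \<in> {R. R \<ge> 0 \<and> achievable_P N F K P d R eps}"
      using achievable_N[OF d, of eps F P] eps by simp
    then show ?thesis by blast
  qed
next
  fix R assume "R \<in> {R. R \<ge> 0 \<and> achievable_P N F K P d R eps}"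
  then have R0: "R \<ge> 0" and ach: "achievable_P N F K P d R eps" by auto
  then obtain e where e: "\<forall>Ms\<in>cache_tuples N F K. achievable_det N F K Ms d R (e Ms)"
    and esum: "(\<Sum>Ms\<in>cache_tuples N F K. (\<Prod>k\<in>{1..K}. pmf P (Ms k)) * e Ms) \<le> eps"
    unfolding achievable_P_def by blast
  have esum': "(\<Sum>Ms\<in>cache_tuples N F K. wt K P Ms * e Ms) \<le> eps" using esum by (simp add: wt_def)
  have dT: "d ` T \<subseteq> {1..N}" using d T by (auto simp: demands_def)
  define n where "n = real (card T)"
  define E where "E = (\<Sum>k\<in>T. \<Sum>j\<in>{1..F}. (1 - pb N F P (d k, j)) ^ card {k'\<in>T. k' \<le> k})"
  have ptw: "wt K P Ms * (real (card (Bset F Ms d T)) - 1 - n ^ 2 * e Ms * real F) \<le> wt K P Ms * (R * real F)"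
    if "Ms \<in> cache_tuples N F K" for Ms
    using core[OF e[rule_format, OF that] R0 T dT] by (intro mult_left_mono wt_nonneg) (simp_all add: n_def)
  have "(\<Sum>Ms\<in>cache_tuples N F K. wt K P Ms * (real (card (Bset F Ms d T)) - 1 - n ^ 2 * e Ms * real F))
        \<le> (\<Sum>Ms\<in>cache_tuples N F K. wt K P Ms * (R * real F))"
    by (rule sum_mono) (rule ptw)
  also have "\<dots> = R * real F" by (simp add: sum_distrib_right[symmetric] sum_wt[OF vp])
  finally have A0: "(\<Sum>Ms\<in>cache_tuples N F K. wt K P Ms * (real (card (Bset F Ms d T)) - 1 - n ^ 2 * e Ms * real F)) \<le> R * real F" .
  have A: "(\<Sum>Ms\<in>cache_tuples N F K. wt K P Ms * real (card (Bset F Ms d T)))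
       - (\<Sum>Ms\<in>cache_tuples N F K. wt K P Ms) - n^2 * real F * (\<Sum>Ms\<in>cache_tuples N F K. wt K P Ms * e Ms)
       \<le> R * real F"
  proof -
    have "(\<Sum>Ms\<in>cache_tuples N F K. wt K P Ms * (real (card (Bset F Ms d T)) - 1 - n ^ 2 * e Ms * real F))
      = (\<Sum>Ms\<in>cache_tuples N F K. wt K P Ms * real (card (Bset F Ms d T)) - wt K P Ms - (n^2 * real F) * (wt K P Ms * e Ms))"
      by (rule sum.cong) (simp_all add: algebra_simps)
    also have "\<dots> = (\<Sum>Ms\<in>cache_tuples N F K. wt K P Ms * real (card (Bset F Ms d T)))
       - (\<Sum>Ms\<in>cache_tuples N F K. wt K P Ms) - n^2 * real F * (\<Sum>Ms\<in>cache_tuples N F K. wt K P Ms * e Ms)"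
      by (simp only: sum_subtractf sum_distrib_left)
    finally show ?thesis using A0 by simp
  qed
  have B: "n^2 * real F * (\<Sum>Ms\<in>cache_tuples N F K. wt K P Ms * e Ms) \<le> n^2 * real F * eps"
    using esum' by (intro mult_left_mono) auto
  have "E - 1 - n^2 * real F * eps \<le> R * real F"
    using A B by (simp add: sum_wt[OF vp] expect_Bset[OF vp T inj] E_def)
  then have "(E - 1 - n^2 * real F * eps) / real F \<le> R" using F by (simp add: divide_le_eq)
  then show "E / real F - 1 / real F - real (card T) ^ 2 * eps \<le> R"
    using F by (simp add: n_def diff_divide_distrib)
qed



lemma aux_mod1: "(a::nat) \<le> b \<Longrightarrow> b < N \<Longrightarrow> (a + t) mod N = (b + t) mod N \<Longrightarrow> a = b"
proof -
  assume ab: "a \<le> b" "b < N" "(a + t) mod N = (b + t) mod N"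
  then have "N dvd (b + t) - (a + t)" using mod_eq_dvd_iff_nat[of "a+t" "b+t" N] by simp
  then have "N dvd b - a" by simp
  moreover have "b - a < N" using ab by simp
  ultimately have "b - a = 0" using nat_dvd_not_less by (metis gr0I)
  then show "a = b" using ab by simp
qed

lemma mod_shift_inj: "(a::nat) < N \<Longrightarrow> b < N \<Longrightarrow> (a + t) mod N = (b + t) mod N \<Longrightarrow> a = b"
  by (metis aux_mod1 nat_le_linear)

definition Tset :: "nat \<Rightarrow> (nat \<Rightarrow> nat) \<Rightarrow> nat set" where
  "Tset K d = {k\<in>{1..K}. \<forall>k'\<in>{1..K}. k' < k \<longrightarrow> d k' \<noteq> d k}"

definition posn :: "nat set \<Rightarrow> nat \<Rightarrow> nat" where
  "posn T k = card {k'\<in>T. k' \<le> k}"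

lemma Tset_sub: "Tset K d \<subseteq> {1..K}" by (auto simp: Tset_def)

lemma finite_Tset[simp]: "finite (Tset K d)"
  using Tset_sub finite_subset by blast

lemma Tset_inj: "inj_on d (Tset K d)"
proof (rule inj_onI)
  fix x y assume x: "x \<in> Tset K d" and y: "y \<in> Tset K d" and eq: "d x = d y"
  have x1: "x \<in> {1..K}" using x Tset_sub by blast
  have y1: "y \<in> {1..K}" using y Tset_sub by blast
  have xP: "\<forall>k'\<in>{1..K}. k' < x \<longrightarrow> d k' \<noteq> d x" using x unfolding Tset_def by blast
  have yP: "\<forall>k'\<in>{1..K}. k' < y \<longrightarrow> d k' \<noteq> d y" using y unfolding Tset_def by blast
  have "\<not> x < y"
  proof
    assume "x < y"
    then have "d x \<noteq> d y" using yP x1 by simp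
    then show False using eq by simp
  qed
  moreover have "\<not> y < x"
  proof
    assume "y < x"
    then have "d y \<noteq> d x" using xP y1 by simp
    then show False using eq by simp
  qed
  ultimately show "x = y" by simp
qed

lemma Tset_img: "d ` Tset K d = d ` {1..K}"
proof
  show "d ` Tset K d \<subseteq> d ` {1..K}" using Tset_sub by blast
next
  show "d ` {1..K} \<subseteq> d ` Tset K d"
  proof
    fix v assume "v \<in> d ` {1..K}"
    then obtain k where k: "k \<in> {1..K}" "d k = v" by blast
    define k0 where "k0 = (LEAST k'. k' \<in> {1..K} \<and> d k' = v)"
    have k0: "k0 \<in> {1..K} \<and> d k0 = v" unfolding k0_def by (rule LeastI[of _ k]) (use k in auto)
    have "\<forall>k'\<in>{1..K}. k' < k0 \<longrightarrow> d k' \<noteq> d k0"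
    proof (intro ballI impI)
      fix k' assume k'1: "k' \<in> {1..K}" and lt: "k' < k0"
      show "d k' \<noteq> d k0"
      proof
        assume "d k' = d k0"
        then have "k' \<in> {1..K} \<and> d k' = v" using k0 k'1 by simp
        then have "k0 \<le> k'" unfolding k0_def by (rule Least_le)
        then show False using lt by simp
      qed
    qed
    then have "k0 \<in> Tset K d" using k0 by (auto simp: Tset_def)
    then show "v \<in> d ` Tset K d" using k0 by blast
  qed
qed

lemma card_Tset: "card (Tset K d) = card (d ` {1..K})"
  using card_image[OF Tset_inj[of d K]] Tset_img[of d K] by simp

lemma posn_bij:
  assumes fin: "finite (T :: nat set)"
  shows "bij_betw (posn T) T {1..card T}"
proof -
  have mono: "posn T x < posn T y" if "x \<in> T" "y \<in> T" "x < y" for x y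
  proof -
    have "{k'\<in>T. k' \<le> x} \<subset> {k'\<in>T. k' \<le> y}"
    proof (rule psubsetI)
      show "{k'\<in>T. k' \<le> x} \<subseteq> {k'\<in>T. k' \<le> y}" using that by auto
      have "y \<in> {k'\<in>T. k' \<le> y}" "y \<notin> {k'\<in>T. k' \<le> x}" using that by auto
      then show "{k'\<in>T. k' \<le> x} \<noteq> {k'\<in>T. k' \<le> y}" by blast
    qed
    moreover have "finite {k'\<in>T. k' \<le> y}" using fin by auto
    ultimately show ?thesis unfolding posn_def by (simp add: psubset_card_mono)
  qed
  have inj: "inj_on (posn T) T"
  proof (rule inj_onI)
    fix x y assume "x \<in> T" "y \<in> T" "posn T x = posn T y"
    then show "x = y" using mono[of x y] mono[of y x] by (cases x y rule: linorder_cases) auto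
  qed
  have sub: "posn T ` T \<subseteq> {1..card T}"
  proof
    fix p assume "p \<in> posn T ` T"
    then obtain x where x: "x \<in> T" "p = posn T x" by blast
    have "card {k'\<in>T. k' \<le> x} > 0" using x fin by (subst card_gt_0_iff) auto
    then have "posn T x \<ge> 1" unfolding posn_def by simp
    moreover have "posn T x \<le> card T" unfolding posn_def by (rule card_mono[OF fin]) auto
    ultimately show "p \<in> {1..card T}" using x by simp
  qed
  have "posn T ` T = {1..card T}"
    by (rule card_subset_eq) (use sub inj in \<open>auto simp: card_image\<close>)
  then show ?thesis using inj by (simp add: bij_betw_def)
qed

lemma length_filter_rev_sort: "length (filter P (rev (sort xs))) = length (filter P xs)"
proof -
  have "mset (filter P (rev (sort xs))) = mset (filter P xs)" by (simp add: mset_filter)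
  then show ?thesis by (metis size_mset)
qed

lemma Ne_stats:
  assumes d: "d \<in> demands N K"
  shows "Ne (stats N K d) = card (d ` {1..K})"
proof -
  define c where "c i = card {k\<in>{1..K}. d k = i}" for i
  have "Ne (stats N K d) = length (filter (\<lambda>x. 0 < x) (map c [1..<N+1]))"
    unfolding Ne_def stats_def c_def by (rule length_filter_rev_sort)
  also have "\<dots> = length (filter (\<lambda>i. 0 < c i) [1..<N+1])" by (simp add: filter_map o_def)
  also have "\<dots> = card (set (filter (\<lambda>i. 0 < c i) [1..<N+1]))"
    by (rule distinct_card[symmetric]) simp
  also have "set (filter (\<lambda>i. 0 < c i) [1..<N+1]) = d ` {1..K}"
  proof -
    have "0 < c i \<longleftrightarrow> (\<exists>k\<in>{1..K}. d k = i)" for i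
      unfolding c_def by (subst card_gt_0_iff) auto
    moreover have "d ` {1..K} \<subseteq> {1..N}" using d by (auto simp: demands_def)
    ultimately show ?thesis by auto
  qed
  finally show ?thesis .
qed

definition sh :: "nat \<Rightarrow> nat \<Rightarrow> nat \<Rightarrow> nat" where
  "sh N t f = (f - 1 + t) mod N + 1"

definition shd :: "nat \<Rightarrow> nat \<Rightarrow> nat \<Rightarrow> (nat \<Rightarrow> nat) \<Rightarrow> (nat \<Rightarrow> nat)" where
  "shd N K t d = restrict (sh N t \<circ> d) {1..K}"

lemma sh_range: "N > 0 \<Longrightarrow> sh N t f \<in> {1..N}"
  by (simp add: sh_def Suc_le_eq)

lemma sh_inj: "inj_on (sh N t) {1..N}"
proof (rule inj_onI)
  fix x y assume "x \<in> {1..N}" "y \<in> {1..N}" "sh N t x = sh N t y"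
  then have "x - 1 = y - 1" using mod_shift_inj[of "x-1" N "y-1" t] by (auto simp: sh_def)
  moreover have "x \<ge> 1" "y \<ge> 1" using \<open>x \<in> {1..N}\<close> \<open>y \<in> {1..N}\<close> by auto
  ultimately show "x = y" by arith
qed

lemma sh_bij_t:
  assumes N: "N > 0" and f: "f \<in> {1..N}"
  shows "bij_betw (\<lambda>t. sh N t f) {..<N} {1..N}"
proof -
  have inj: "inj_on (\<lambda>t. sh N t f) {..<N}"
  proof (rule inj_onI)
    fix x y assume "x \<in> {..<N}" "y \<in> {..<N}" "sh N x f = sh N y f"
    then show "x = y" using mod_shift_inj[of x N y "f - 1"] by (auto simp: sh_def add.commute)
  qed
  have sub: "(\<lambda>t. sh N t f) ` {..<N} \<subseteq> {1..N}" using sh_range[OF N] by auto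
  have "(\<lambda>t. sh N t f) ` {..<N} = {1..N}"
    by (rule card_subset_eq) (use sub inj in \<open>auto simp: card_image\<close>)
  then show ?thesis using inj by (simp add: bij_betw_def)
qed

lemma sum_sh: "N > 0 \<Longrightarrow> f \<in> {1..N} \<Longrightarrow> (\<Sum>t<N. g (sh N t f)) = (\<Sum>f'\<in>{1..N}. g f')"
  using sum.reindex_bij_betw[OF sh_bij_t, of N f g] by simp

lemma finite_demands[simp]: "finite (demands N K)"
  by (simp add: demands_def finite_PiE)

lemma shd_demands: "N > 0 \<Longrightarrow> shd N K t d \<in> demands N K"
  using sh_range by (auto simp: shd_def demands_def)

lemma shd_apply: "k \<in> {1..K} \<Longrightarrow> shd N K t d k = sh N t (d k)"
  by (simp add: shd_def)

lemma shd_eq_iff: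
  assumes d: "d \<in> demands N K" and k: "k \<in> {1..K}" and k': "k' \<in> {1..K}"
  shows "shd N K t d k' = shd N K t d k \<longleftrightarrow> d k' = d k"
proof -
  have a: "d k \<in> {1..N}" using d k by (auto simp: demands_def)
  have b: "d k' \<in> {1..N}" using d k' by (auto simp: demands_def)
  have "(sh N t (d k') = sh N t (d k)) = (d k' = d k)" by (rule inj_on_eq_iff[OF sh_inj b a])
  then show ?thesis using k k' by (simp add: shd_apply)
qed

lemma Tset_shd: "d \<in> demands N K \<Longrightarrow> Tset K (shd N K t d) = Tset K d"
proof -
  assume d: "d \<in> demands N K"
  show ?thesis unfolding Tset_def
  proof (rule Collect_cong)
    fix k show "(k \<in> {1..K} \<and> (\<forall>k'\<in>{1..K}. k' < k \<longrightarrow> shd N K t d k' \<noteq> shd N K t d k)) =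
                (k \<in> {1..K} \<and> (\<forall>k'\<in>{1..K}. k' < k \<longrightarrow> d k' \<noteq> d k))"
    proof (cases "k \<in> {1..K}")
      case True
      have "(\<forall>k'\<in>{1..K}. k' < k \<longrightarrow> shd N K t d k' \<noteq> shd N K t d k) =
            (\<forall>k'\<in>{1..K}. k' < k \<longrightarrow> d k' \<noteq> d k)"
      proof (rule ball_cong[OF refl])
        fix k' assume "k' \<in> {1..K}"
        show "(k' < k \<longrightarrow> shd N K t d k' \<noteq> shd N K t d k) = (k' < k \<longrightarrow> d k' \<noteq> d k)"
          using shd_eq_iff[OF d True \<open>k' \<in> {1..K}\<close>, of t] by blast
      qed
      then show ?thesis by (simp only: True simp_thms)
    next
      case False then show ?thesis by (simp only: simp_thms)
    qed
  qed
qed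

lemma shd_inj: "inj_on (shd N K t) (demands N K)"
proof (rule inj_onI)
  fix d1 d2 assume d1: "d1 \<in> demands N K" and d2: "d2 \<in> demands N K" and eq: "shd N K t d1 = shd N K t d2"
  show "d1 = d2"
  proof
    fix k show "d1 k = d2 k"
    proof (cases "k \<in> {1..K}")
      case True
      have "shd N K t d1 k = shd N K t d2 k" using eq by simp
      then have "sh N t (d1 k) = sh N t (d2 k)" using True by (simp add: shd_apply)
      moreover have "d1 k \<in> {1..N}" "d2 k \<in> {1..N}" using d1 d2 True by (auto simp: demands_def)
      ultimately show ?thesis by (meson inj_onD sh_inj)
    next
      case False
      have "d1 k = undefined" using d1 False unfolding demands_def by (rule PiE_arb)
      moreover have "d2 k = undefined" using d2 False unfolding demands_def by (rule PiE_arb)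
      ultimately show ?thesis by simp
    qed
  qed
qed

lemma stats_shd:
  assumes N: "N > 0" and d: "d \<in> demands N K"
  shows "stats N K (shd N K t d) = stats N K d"
proof -
  define c where "c i = card {k\<in>{1..K}. d k = i}" for i
  define c' where "c' i = card {k\<in>{1..K}. shd N K t d k = i}" for i
  have cc: "c' (sh N t f) = c f" if "f \<in> {1..N}" for f
  proof -
    have "{k\<in>{1..K}. shd N K t d k = sh N t f} = {k\<in>{1..K}. d k = f}"
    proof (rule Collect_cong)
      fix k
      show "(k \<in> {1..K} \<and> shd N K t d k = sh N t f) = (k \<in> {1..K} \<and> d k = f)"
      proof (cases "k \<in> {1..K}")
        case True
        have dk: "d k \<in> {1..N}" using d True by (auto simp: demands_def)
        have "(sh N t (d k) = sh N t f) = (d k = f)" by (rule inj_on_eq_iff[OF sh_inj dk that])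
        then show ?thesis using True by (simp add: shd_apply)
      next
        case False then show ?thesis by blast
      qed
    qed
    then show ?thesis by (simp add: c_def c'_def)
  qed
  have bij: "bij_betw (sh N t) {1..N} {1..N}"
  proof -
    have "sh N t ` {1..N} = {1..N}"
      by (rule card_subset_eq) (use sh_range[OF N] sh_inj[of N t] in \<open>auto simp: card_image\<close>)
    then show ?thesis using sh_inj by (simp add: bij_betw_def)
  qed
  have sL: "set [1..<N+1] = {1..N}" by auto
  have m1: "mset (map (sh N t) [1..<N+1]) = mset [1..<N+1]"
  proof (rule set_eq_iff_mset_eq_distinct[THEN iffD1])
    show "distinct (map (sh N t) [1..<N+1])" unfolding distinct_map sL using sh_inj[of N t]
      by simp
    show "distinct [1..<N+1]" by simp
    show "set (map (sh N t) [1..<N+1]) = set [1..<N+1]"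
      unfolding set_map sL using bij by (simp add: bij_betw_def)
  qed
  have "mset (map c' [1..<N+1]) = mset (map c' (map (sh N t) [1..<N+1]))"
    by (simp only: mset_map[of c'] m1)
  also have "map c' (map (sh N t) [1..<N+1]) = map c [1..<N+1]"
    unfolding map_map sL by (rule map_cong[OF refl]) (unfold sL, simp add: cc)
  finally have meq: "mset (map c' [1..<N+1]) = mset (map c [1..<N+1])" .
  have "sort (map c' [1..<N+1]) = sort (map c [1..<N+1])"
    by (rule properties_for_sort) (simp only: mset_sort meq, rule sorted_sort)
  then show ?thesis unfolding stats_def c_def[symmetric] c'_def[symmetric] by simp
qed

lemma shd_bij:
  assumes N: "N > 0"
  shows "bij_betw (shd N K t) (demands_of_stats N K s) (demands_of_stats N K s)"
proof -
  let ?D = "demands_of_stats N K s"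
  have Dsub: "?D \<subseteq> demands N K" unfolding demands_of_stats_def by blast
  have inj: "inj_on (shd N K t) ?D"
    by (rule inj_on_subset[OF shd_inj Dsub])
  have sub: "shd N K t ` ?D \<subseteq> ?D"
  proof
    fix y assume "y \<in> shd N K t ` ?D"
    then obtain d where d: "d \<in> ?D" "y = shd N K t d" by blast
    then have dd: "d \<in> demands N K" and ds: "stats N K d = s" unfolding demands_of_stats_def by auto
    have "shd N K t d \<in> demands N K" by (rule shd_demands[OF N])
    moreover have "stats N K (shd N K t d) = s" using stats_shd[OF N dd] ds by simp
    ultimately show "y \<in> ?D" using d unfolding demands_of_stats_def by blast
  qed
  have fin: "finite ?D" by (rule finite_subset[OF Dsub]) simp
  have "shd N K t ` ?D = ?D"
    by (rule card_subset_eq[OF fin sub]) (simp add: card_image[OF inj])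
  then show ?thesis using inj by (simp add: bij_betw_def)
qed



lemma avg_lemma:
  fixes h :: "nat \<Rightarrow> nat \<Rightarrow> real"
  assumes N: "N > 0" and n: "\<And>d. d \<in> demands_of_stats N K s \<Longrightarrow> card (Tset K d) = n"
  shows "real N * (\<Sum>d\<in>demands_of_stats N K s. \<Sum>k\<in>Tset K d. h (posn (Tset K d) k) (d k))
         = real (card (demands_of_stats N K s)) * (\<Sum>i\<in>{1..n}. \<Sum>f\<in>{1..N}. h i f)"
proof -
  define D where "D = demands_of_stats N K s"
  define G where "G d = (\<Sum>k\<in>Tset K d. h (posn (Tset K d) k) (d k))" for d
  have dD: "d \<in> demands N K" if "d \<in> D" for d using that by (simp add: D_def demands_of_stats_def)
  have dk: "d k \<in> {1..N}" if "d \<in> D" "k \<in> Tset K d" for d k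
  proof -
    have k: "k \<in> {1..K}" using Tset_sub that(2) by blast
    show ?thesis by (rule PiE_mem[OF dD[OF that(1), unfolded demands_def] k])
  qed
  have step: "(\<Sum>d\<in>D. G d) = (\<Sum>d\<in>D. \<Sum>k\<in>Tset K d. h (posn (Tset K d) k) (sh N t (d k)))" for t
  proof -
    have "(\<Sum>d\<in>D. G d) = (\<Sum>d\<in>D. G (shd N K t d))"
      using sum.reindex_bij_betw[OF shd_bij[OF N, of K t s], of G] by (simp add: D_def)
    also have "\<dots> = (\<Sum>d\<in>D. \<Sum>k\<in>Tset K d. h (posn (Tset K d) k) (sh N t (d k)))"
    proof (rule sum.cong[OF refl])
      fix d assume d: "d \<in> D"
      have "G (shd N K t d) = (\<Sum>k\<in>Tset K d. h (posn (Tset K d) k) (shd N K t d k))"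
        unfolding G_def Tset_shd[OF dD[OF d]] ..
      also have "\<dots> = (\<Sum>k\<in>Tset K d. h (posn (Tset K d) k) (sh N t (d k)))"
      proof (rule sum.cong[OF refl])
        fix k assume "k \<in> Tset K d"
        then have "k \<in> {1..K}" using Tset_sub by blast
        then show "h (posn (Tset K d) k) (shd N K t d k) = h (posn (Tset K d) k) (sh N t (d k))"
          by (simp add: shd_apply)
      qed
      finally show "G (shd N K t d) = (\<Sum>k\<in>Tset K d. h (posn (Tset K d) k) (sh N t (d k)))" .
    qed
    finally show ?thesis .
  qed
  have "real N * (\<Sum>d\<in>D. G d) = (\<Sum>t<N. \<Sum>d\<in>D. G d)" by simp
  also have "\<dots> = (\<Sum>t<N. \<Sum>d\<in>D. \<Sum>k\<in>Tset K d. h (posn (Tset K d) k) (sh N t (d k)))"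
    by (rule sum.cong[OF refl]) (rule step)
  also have "\<dots> = (\<Sum>d\<in>D. \<Sum>k\<in>Tset K d. \<Sum>t<N. h (posn (Tset K d) k) (sh N t (d k)))"
  proof -
    have "(\<Sum>t<N. \<Sum>d\<in>D. \<Sum>k\<in>Tset K d. h (posn (Tset K d) k) (sh N t (d k)))
        = (\<Sum>d\<in>D. \<Sum>t<N. \<Sum>k\<in>Tset K d. h (posn (Tset K d) k) (sh N t (d k)))"
      by (rule sum.swap)
    also have "\<dots> = (\<Sum>d\<in>D. \<Sum>k\<in>Tset K d. \<Sum>t<N. h (posn (Tset K d) k) (sh N t (d k)))"
      by (rule sum.cong[OF refl], rule sum.swap)
    finally show ?thesis .
  qed
  also have "\<dots> = (\<Sum>d\<in>D. \<Sum>k\<in>Tset K d. \<Sum>f\<in>{1..N}. h (posn (Tset K d) k) f)"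
    by (intro sum.cong refl sum_sh[OF N] dk) auto
  also have "\<dots> = (\<Sum>d\<in>D. \<Sum>i\<in>{1..n}. \<Sum>f\<in>{1..N}. h i f)"
  proof (rule sum.cong[OF refl])
    fix d assume d: "d \<in> D"
    have "(\<Sum>k\<in>Tset K d. \<Sum>f\<in>{1..N}. h (posn (Tset K d) k) f) = (\<Sum>i\<in>{1..card (Tset K d)}. \<Sum>f\<in>{1..N}. h i f)"
      using sum.reindex_bij_betw[OF posn_bij[OF finite_Tset[of K d]], of "\<lambda>i. \<Sum>f\<in>{1..N}. h i f"] .
    then show "(\<Sum>k\<in>Tset K d. \<Sum>f\<in>{1..N}. h (posn (Tset K d) k) f) = (\<Sum>i\<in>{1..n}. \<Sum>f\<in>{1..N}. h i f)"
      using n[of d] d by (simp add: D_def)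
  qed
  also have "\<dots> = real (card D) * (\<Sum>i\<in>{1..n}. \<Sum>f\<in>{1..N}. h i f)" by simp
  finally show ?thesis by (simp add: D_def G_def)
qed

lemma pb_nonneg: "pb N F P b \<ge> 0"
  unfolding pb_def by (rule sum_nonneg) simp

lemma pb_le1: "valid_prefetch N F M P \<Longrightarrow> pb N F P b \<le> 1"
proof -
  assume vp: "valid_prefetch N F M P"
  have "pb N F P b \<le> (\<Sum>S\<in>Pow (bit_idx N F). pmf P S)"
    unfolding pb_def by (rule sum_mono) (simp add: pmf_nonneg)
  then show ?thesis using sum_pow_pmf[OF vp] by simp
qed

lemma sum_pb:
  assumes vp: "valid_prefetch N F M P"
  shows "(\<Sum>b\<in>bit_idx N F. pb N F P b) \<le> M * real F"
proof -
  have "(\<Sum>b\<in>bit_idx N F. pb N F P b) = (\<Sum>S\<in>Pow (bit_idx N F). \<Sum>b\<in>bit_idx N F. pmf P S * (if b \<in> S then 1 else 0))"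
    unfolding pb_def by (rule sum.swap)
  also have "\<dots> = (\<Sum>S\<in>Pow (bit_idx N F). pmf P S * real (card S))"
  proof (rule sum.cong[OF refl])
    fix S assume S: "S \<in> Pow (bit_idx N F)"
    have "(\<Sum>b\<in>bit_idx N F. pmf P S * (if b \<in> S then 1 else 0)) = pmf P S * (\<Sum>b\<in>bit_idx N F. (if b \<in> S then 1 else 0))"
      by (simp add: sum_distrib_left)
    also have "(\<Sum>b\<in>bit_idx N F. (if b \<in> S then 1 else (0::real))) = real (card S)"
    proof -
      have "(\<Sum>b\<in>bit_idx N F. (if b \<in> S then 1 else (0::real))) = (\<Sum>b\<in>S. (if b \<in> S then 1 else (0::real)))"
        by (rule sum.mono_neutral_right) (use S in auto)
      also have "\<dots> = (\<Sum>b\<in>S. 1)" by simp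
      finally show ?thesis by simp
    qed
    finally show "(\<Sum>b\<in>bit_idx N F. pmf P S * (if b \<in> S then 1 else 0)) = pmf P S * real (card S)" .
  qed
  also have "\<dots> \<le> (\<Sum>S\<in>Pow (bit_idx N F). pmf P S * (M * real F))"
  proof (rule sum_mono)
    fix S assume "S \<in> Pow (bit_idx N F)"
    show "pmf P S * real (card S) \<le> pmf P S * (M * real F)"
    proof (cases "S \<in> set_pmf P")
      case True
      then have "real (card S) \<le> M * real F" using vp by (auto simp: valid_prefetch_def)
      then show ?thesis by (intro mult_left_mono) (simp_all add: pmf_nonneg)
    next
      case False then show ?thesis by (simp add: set_pmf_eq)
    qed
  qed
  also have "\<dots> = M * real F" by (simp add: sum_distrib_right[symmetric] sum_pow_pmf[OF vp])
  finally show ?thesis .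
qed

lemma convex_pow_nonneg: "convex_on {0::real..} (\<lambda>x. x ^ i)"
proof (cases "even i")
  case True
  then show ?thesis using convex_on_subset[OF convex_power_even[OF True]] by blast
next
  case False
  then show ?thesis by (rule convex_power_odd)
qed

lemma Hbound:
  assumes vp: "valid_prefetch N F M P" and M: "0 < M" "M \<le> real N" and F: "F > 0"
  shows "real N * real F * (1 - M / real N) ^ i \<le> (\<Sum>f\<in>{1..N}. \<Sum>j\<in>{1..F}. (1 - pb N F P (f, j)) ^ i)"
proof -
  define m where "m = real N * real F"
  have N0: "N > 0" using M by linarith
  have m0: "m > 0" using N0 F by (simp add: m_def)
  have cardb: "card (bit_idx N F) = N * F" by (rule card_bit_idx)
  have "(1,1) \<in> bit_idx N F" using N0 F by (simp add: bit_idx_def)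
  then have ne: "bit_idx N F \<noteq> {}" by blast
  have eqsum: "(\<Sum>f\<in>{1..N}. \<Sum>j\<in>{1..F}. (1 - pb N F P (f, j)) ^ i) = (\<Sum>b\<in>bit_idx N F. (1 - pb N F P b) ^ i)"
    unfolding bit_idx_def by (simp add: sum.cartesian_product)
  have J: "(\<Sum>b\<in>bit_idx N F. (1/m) *\<^sub>R (1 - pb N F P b)) ^ i \<le> (\<Sum>b\<in>bit_idx N F. (1/m) * (1 - pb N F P b) ^ i)"
  proof (rule convex_on_sum[OF finite_bit_idx ne convex_pow_nonneg])
    show "(\<Sum>b\<in>bit_idx N F. 1 / m) = 1" using cardb m0 N0 F by (simp add: m_def)
    show "\<And>b. b \<in> bit_idx N F \<Longrightarrow> 0 \<le> 1 / m" using m0 by simp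
    show "\<And>b. b \<in> bit_idx N F \<Longrightarrow> 1 - pb N F P b \<in> {0..}" using pb_le1[OF vp] by simp
  qed
  have base: "(\<Sum>b\<in>bit_idx N F. (1/m) *\<^sub>R (1 - pb N F P b)) = 1 - (\<Sum>b\<in>bit_idx N F. pb N F P b) / m"
  proof -
    have "(\<Sum>b\<in>bit_idx N F. (1/m) *\<^sub>R (1 - pb N F P b)) = (\<Sum>b\<in>bit_idx N F. 1 - pb N F P b) / m"
      by (simp add: sum_divide_distrib)
    also have "(\<Sum>b\<in>bit_idx N F. 1 - pb N F P b) = m - (\<Sum>b\<in>bit_idx N F. pb N F P b)"
      by (simp add: sum_subtractf cardb m_def)
    also have "(m - (\<Sum>b\<in>bit_idx N F. pb N F P b)) / m = 1 - (\<Sum>b\<in>bit_idx N F. pb N F P b) / m"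
      using m0 by (simp add: diff_divide_distrib)
    finally show ?thesis .
  qed
  have "(\<Sum>b\<in>bit_idx N F. pb N F P b) / m \<le> M * real F / m"
    using sum_pb[OF vp] m0 by (simp add: divide_right_mono)
  also have "M * real F / m = M / real N" using F by (simp add: m_def)
  finally have b1: "1 - M / real N \<le> 1 - (\<Sum>b\<in>bit_idx N F. pb N F P b) / m" by simp
  have b0: "0 \<le> 1 - M / real N" using M N0 by simp
  have "(1 - M / real N) ^ i \<le> (1 - (\<Sum>b\<in>bit_idx N F. pb N F P b) / m) ^ i"
    by (rule power_mono[OF b1 b0])
  also have "\<dots> \<le> (\<Sum>b\<in>bit_idx N F. (1/m) * (1 - pb N F P b) ^ i)" using J base by simp
  also have "\<dots> = (\<Sum>b\<in>bit_idx N F. (1 - pb N F P b) ^ i) / m" by (simp add: sum_divide_distrib)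
  finally have "m * (1 - M / real N) ^ i \<le> (\<Sum>b\<in>bit_idx N F. (1 - pb N F P b) ^ i)"
    using m0 by (simp add: le_divide_eq mult.commute)
  then show ?thesis using eqsum by (simp add: m_def)
qed

lemma geom:
  fixes q :: real
  shows "(\<Sum>i\<in>{1..n}. q ^ i) * (1 - q) = q - q ^ (n + 1)"
proof (induction n)
  case 0 then show ?case by simp
next
  case (Suc n)
  have "(\<Sum>i\<in>{1..Suc n}. q ^ i) = (\<Sum>i\<in>{1..n}. q ^ i) + q ^ Suc n" by (simp add: sum.cl_ivl_Suc)
  then have "(\<Sum>i\<in>{1..Suc n}. q ^ i) * (1 - q) = (\<Sum>i\<in>{1..n}. q ^ i) * (1 - q) + q ^ Suc n * (1 - q)"
    by (simp add: algebra_simps)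
  also have "\<dots> = q - q ^ (n + 1) + q ^ Suc n * (1 - q)" using Suc by simp
  also have "\<dots> = q - q ^ (Suc n + 1)" by (simp add: algebra_simps)
  finally show ?case .
qed

lemma geom2:
  fixes N M :: real
  assumes "0 < M" "M \<le> N"
  shows "(\<Sum>i\<in>{1..n}. (1 - M / N) ^ i) = (N - M) / M * (1 - (1 - M / N) ^ n)"
proof -
  have N0: "N > 0" using assms by linarith
  define q where "q = 1 - M / N"
  define S where "S = (\<Sum>i\<in>{1..n}. q ^ i)"
  have c: "M / N \<noteq> 0" using assms N0 by simp
  have eq: "S * (M / N) = q - q ^ (n + 1)"
    using geom[where n=n and q=q] unfolding S_def q_def by simp
  have "S = (S * (M / N)) / (M / N)" using c by simp
  also have "\<dots> = (q - q ^ (n + 1)) / (M / N)" by (simp only: eq)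
  also have "q - q ^ (n + 1) = q * (1 - q ^ n)" by (simp add: algebra_simps)
  also have "q * (1 - q ^ n) / (M / N) = (q / (M / N)) * (1 - q ^ n)" by simp
  also have "q / (M / N) = (N - M) / M" unfolding q_def using N0 assms by (simp add: field_simps)
  finally show ?thesis by (simp add: S_def q_def)
qed



theorem lemma3:
  fixes N K F :: nat and M eps :: real and s :: "nat list"
    and P :: "(nat \<times> nat) set pmf"
  assumes "0 < M" and "M \<le> real N" and "F > 0" and "eps > 0"
    and "s \<in> stats N K ` demands N K"
    and "valid_prefetch N F M P"
  shows "Rstar_s N F K eps s P \<ge>
           (real N - M) / M * (1 - (1 - M / real N) ^ Ne s)
           - (1 / real F + real (Ne s) ^ 2 * eps)"
proof -
  note M0 = assms(1) and MN = assms(2) and F = assms(3) and eps = assms(4) and vp = assms(6)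
  have N0: "N > 0" using M0 MN by linarith
  obtain d0 where d0: "d0 \<in> demands N K" "stats N K d0 = s" using assms(5) by blast
  define D where "D = demands_of_stats N K s"
  have d0D: "d0 \<in> D" using d0 by (simp add: D_def demands_of_stats_def)
  have finD: "finite D" by (rule finite_subset[of _ "demands N K"]) (auto simp: D_def demands_of_stats_def)
  have cD: "card D > 0" using finD d0D by (auto simp: card_gt_0_iff)
  define n where "n = Ne s"
  have dD: "d \<in> demands N K" "stats N K d = s" if "d \<in> D" for d using that by (auto simp: D_def demands_of_stats_def)
  have nT: "card (Tset K d) = n" if "d \<in> D" for d
    using card_Tset[of K d] Ne_stats[OF dD(1)[OF that]] dD(2)[OF that] by (simp add: n_def)
  define q where "q = 1 - M / real N"
  define h where "h i f = (\<Sum>j\<in>{1..F}. (1 - pb N F P (f, j)) ^ i)" for i f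
  define U where "U d = (\<Sum>k\<in>Tset K d. h (posn (Tset K d) k) (d k))" for d
  have Rd: "U d / real F - 1 / real F - real n ^ 2 * eps \<le> Rstar_d N F K eps d P" if "d \<in> D" for d
  proof -
    have "(\<Sum>k\<in>Tset K d. \<Sum>j\<in>{1..F}. (1 - pb N F P (d k, j)) ^ card {k'\<in>Tset K d. k' \<le> k}) / real F
           - 1 / real F - real (card (Tset K d)) ^ 2 * eps \<le> Rstar_d N F K eps d P"
      by (rule Rd_bound[OF vp dD(1)[OF that] Tset_sub Tset_inj F eps])
    then show ?thesis using nT[OF that] by (simp add: U_def h_def posn_def)
  qed
  have avg: "real N * (\<Sum>d\<in>D. U d) = real (card D) * (\<Sum>i\<in>{1..n}. \<Sum>f\<in>{1..N}. h i f)"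
    unfolding D_def U_def by (rule avg_lemma[OF N0]) (use nT in \<open>simp add: D_def\<close>)
  have H: "real N * real F * q ^ i \<le> (\<Sum>f\<in>{1..N}. h i f)" for i
    unfolding q_def h_def by (rule Hbound[OF vp M0 MN F])
  have "real N * (real (card D) * real F * (\<Sum>i\<in>{1..n}. q ^ i))
        = real (card D) * (\<Sum>i\<in>{1..n}. real N * real F * q ^ i)"
    by (simp add: sum_distrib_left algebra_simps)
  also have "\<dots> \<le> real (card D) * (\<Sum>i\<in>{1..n}. \<Sum>f\<in>{1..N}. h i f)"
    by (intro mult_left_mono sum_mono H) simp
  also have "\<dots> = real N * (\<Sum>d\<in>D. U d)" using avg by simp
  finally have SU: "real (card D) * real F * (\<Sum>i\<in>{1..n}. q ^ i) \<le> (\<Sum>d\<in>D. U d)"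
    using N0 by (simp add: mult_le_cancel_left_pos)
  have "(\<Sum>d\<in>D. U d / real F - 1 / real F - real n ^ 2 * eps) \<le> (\<Sum>d\<in>D. Rstar_d N F K eps d P)"
    by (rule sum_mono) (rule Rd)
  moreover have "(\<Sum>d\<in>D. U d / real F - 1 / real F - real n ^ 2 * eps)
      = (\<Sum>d\<in>D. U d) / real F - real (card D) * (1 / real F + real n ^ 2 * eps)"
    by (simp add: sum_subtractf sum_divide_distrib algebra_simps)
  moreover have "real (card D) * (\<Sum>i\<in>{1..n}. q ^ i) \<le> (\<Sum>d\<in>D. U d) / real F"
    using SU F by (simp add: le_divide_eq algebra_simps)
  ultimately have "real (card D) * ((\<Sum>i\<in>{1..n}. q ^ i) - (1 / real F + real n ^ 2 * eps))
       \<le> (\<Sum>d\<in>D. Rstar_d N F K eps d P)"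
    by (simp add: algebra_simps)
  then have "(\<Sum>i\<in>{1..n}. q ^ i) - (1 / real F + real n ^ 2 * eps)
       \<le> (\<Sum>d\<in>D. Rstar_d N F K eps d P) / real (card D)"
    using cD by (simp add: le_divide_eq mult.commute)
  also have "\<dots> = Rstar_s N F K eps s P" by (simp add: Rstar_s_def D_def)
  finally show ?thesis
    using geom2[OF M0 MN, of n] by (simp add: q_def n_def)
qed

end
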